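(* Fix $v\ge0$. Then the function $x\mapsto d_H((0,1),(x,v))$ is strictly increasing on $[0,\infty)$.
   Context: Let $\mathcal{H}=\{(x,v)\in\mathbb{R}^2:v\ge0\}$ and $d_H$ the Riemannian distance on $\mathcal{H}$ induced by the metric $ds^2=v^{-1}(dx^2+dv^2)$ on the open upper half-plane (extended to the boundary $v=0$). *)

theory Defs
  imports "HOL-Analysis.Analysis"
begin

definition HP :: "(real \<times> real) set" where
  "HP = {p. snd p \<ge> 0}"

text \<open>Length density of the metric ds^2 = v^{-1}(dx^2 + dv^2) at point p with velocity d.
  On the boundary v = 0 the density is infinite unless the velocity vanishes
  (extension of the metric to the boundary).\<close>
definition hdens :: "real \<times> real \<Rightarrow> real \<times> real \<Rightarrow> ennreal" where
  "hdens p d = (if snd p > 0 then ennreal (sqrt ((fst d ^ 2 + snd d ^ 2) / snd p))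
               else if d = 0 then 0 else \<infinity>)"

definition hlength :: "(real \<Rightarrow> real \<times> real) \<Rightarrow> ennreal" where
  "hlength g = (\<integral>\<^sup>+ t. hdens (g t) (vector_derivative g (at t)) * indicator {0..1} t \<partial>lborel)"

definition hpaths :: "real \<times> real \<Rightarrow> real \<times> real \<Rightarrow> (real \<Rightarrow> real \<times> real) set" where
  "hpaths p q = {g. g piecewise_C1_differentiable_on {0..1} \<and> g ` {0..1} \<subseteq> HP
                     \<and> g 0 = p \<and> g 1 = q}"

definition dH :: "real \<times> real \<Rightarrow> real \<times> real \<Rightarrow> real" where
  "dH p q = enn2real (INF g \<in> hpaths p q. hlength g)"

end

theory Submission
  imports Defs
begin


lemma nn_integral_superadd:
  "integral\<^sup>N M f + integral\<^sup>N M g \<le> (\<integral>\<^sup>+x. f x + g x \<partial>M)"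
proof -
  let ?S = "\<lambda>h. {s. simple_function M s \<and> s \<le> h}"
  have ne: "?S h \<noteq> {}" for h :: "_ \<Rightarrow> ennreal"
  proof -
    have "(\<lambda>_. 0) \<in> ?S h" by (auto simp: le_fun_def)
    then show ?thesis by blast
  qed
  have "integral\<^sup>N M f + integral\<^sup>N M g = (SUP a\<in>?S f. integral\<^sup>S M a) + (SUP b\<in>?S g. integral\<^sup>S M b)"
    unfolding nn_integral_def by simp
  also have "\<dots> = (SUP a\<in>?S f. SUP b\<in>?S g. integral\<^sup>S M a + integral\<^sup>S M b)"
    by (simp add: ennreal_SUP_add_left[OF ne, symmetric] ennreal_SUP_add_right[OF ne, symmetric])
  also have "\<dots> \<le> (\<integral>\<^sup>+x. f x + g x \<partial>M)"
  proof (intro SUP_least)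
    fix a b assume a: "a \<in> ?S f" and b: "b \<in> ?S g"
    then have "integral\<^sup>S M a + integral\<^sup>S M b = (\<integral>\<^sup>Sx. a x + b x \<partial>M)"
      by (subst simple_integral_add) auto
    also have "\<dots> \<le> (\<integral>\<^sup>+x. f x + g x \<partial>M)"
      unfolding nn_integral_def
      by (rule SUP_upper) (use a b in \<open>auto simp: le_fun_def intro: add_mono\<close>)
    finally show "integral\<^sup>S M a + integral\<^sup>S M b \<le> (\<integral>\<^sup>+x. f x + g x \<partial>M)" .
  qed
  finally show ?thesis .
qed

lemma nn_integral_subcmult:
  assumes "c \<noteq> 0" "c \<noteq> top"
  shows "(\<integral>\<^sup>+x. c * f x \<partial>M) \<le> c * integral\<^sup>N M f"
  unfolding nn_integral_def
proof (intro SUP_least)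
  fix s assume s: "s \<in> {s. simple_function M s \<and> s \<le> (\<lambda>x. c * f x)}"
  define t where "t x = inverse c * s x" for x
  have ic: "c * inverse c = 1" using assms ennreal_divide_self[of c] by (simp add: divide_ennreal_def top.not_eq_extremum)
  have st: "s x = c * t x" for x using ic by (simp add: t_def mult.assoc[symmetric])
  have tf: "t \<le> f"
  proof (rule le_funI)
    fix x have "t x = inverse c * s x" by (simp add: t_def)
    also have "\<dots> \<le> inverse c * (c * f x)" using s by (auto simp: le_fun_def intro: mult_left_mono)
    also have "\<dots> = f x" using ic by (simp add: mult.assoc[symmetric] mult.commute)
    finally show "t x \<le> f x" .
  qed
  have tsf: "simple_function M t" using s unfolding t_def by auto
  have seq: "s = (\<lambda>x. c * t x)" using st by auto
  have "integral\<^sup>S M s = c * integral\<^sup>S M t"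
    unfolding seq using tsf by (rule simple_integral_mult)
  also have "\<dots> \<le> c * (SUP g\<in>{g. simple_function M g \<and> g \<le> f}. integral\<^sup>S M g)"
    by (intro mult_left_mono SUP_upper) (use tsf tf in auto)
  finally show "integral\<^sup>S M s \<le> c * (SUP g\<in>{g. simple_function M g \<and> g \<le> f}. integral\<^sup>S M g)" .
qed
lemma ftc_bound:
  fixes h h' :: "real \<Rightarrow> real" and f :: "real \<Rightarrow> ennreal"
  assumes S: "finite S" and ab: "a \<le> b"
    and der: "\<And>t. t \<in> {a<..<b} - S \<Longrightarrow> (h has_real_derivative h' t) (at t)"
    and cont: "continuous_on {a..b} h"
    and bnd: "\<And>t. t \<in> {a<..<b} - S \<Longrightarrow> ennreal \<bar>h' t\<bar> \<le> f t"
  shows "ennreal (h b - h a) \<le> (\<integral>\<^sup>+t. f t * indicator {a..b} t \<partial>lborel)"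
proof -
  define k where "k t = (if t \<in> {a<..<b} - S then h' t else 0)" for t
  have derk: "(h has_vector_derivative k t) (at t)" if "t \<in> {a<..<b} - S" for t
    using der[OF that] that by (simp add: k_def has_real_derivative_iff_has_vector_derivative)
  have I: "(k has_integral (h b - h a)) {a..b}"
    by (rule fundamental_theorem_of_calculus_interior_strong[OF S ab derk cont])
  define N where "N = (\<integral>\<^sup>+t. ennreal \<bar>k t\<bar> * indicator {a..b} t \<partial>lborel)"
  have NF: "N \<le> (\<integral>\<^sup>+t. f t * indicator {a..b} t \<partial>lborel)"
    unfolding N_def
    by (intro nn_integral_mono) (auto simp: k_def indicator_def intro: bnd)
  have "ennreal (h b - h a) \<le> N"
  proof (cases "N = top")
    case True then show ?thesis by (simp only: True top_greatest)
  next
    case False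
    define F where "F t = \<bar>indicator {a..b} t *\<^sub>R k t\<bar>" for t
    have Fm: "F \<in> lebesgue \<rightarrow>\<^sub>M borel"
      unfolding F_def using borel_measurable_abs[OF has_integral_implies_lebesgue_measurable[OF I]] .
    have NF2: "N = integral\<^sup>N lebesgue F"
      unfolding N_def F_def nn_integral_completion[of lborel, symmetric]
      by (intro nn_integral_cong) (simp add: indicator_def)
    obtain r where r: "N = ennreal r" "0 \<le> r" using False by (cases N rule: ennreal_cases) auto
    have "(F has_integral r) UNIV"
    proof (subst has_integral_iff_nn_integral_lebesgue)
      show "\<And>t. 0 \<le> F t" by (simp add: F_def)
      show "F \<in> borel_measurable lebesgue \<and> integral\<^sup>N lebesgue F = ennreal r \<and> 0 \<le> r"
      proof -
        have "integral\<^sup>N lebesgue F = ennreal r" using NF2 r(1) by metis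
        then show ?thesis using Fm r(2) by blast
      qed
    qed
    then have "((\<lambda>t. if t \<in> {a..b} then \<bar>k t\<bar> else 0) has_integral r) UNIV"
      by (rule has_integral_eq[rotated]) (simp add: F_def indicator_def)
    then have "((\<lambda>t. \<bar>k t\<bar>) has_integral r) {a..b}"
      by (rule has_integral_restrict_UNIV[THEN iffD1])
    then have "h b - h a \<le> r"
      by (rule has_integral_le[OF I]) auto
    then show ?thesis using r(1) by (metis ennreal_leI)
  qed
  then show ?thesis using NF by (rule order_trans)
qed
lemma vd_fst: "(g has_vector_derivative D) F \<Longrightarrow> ((\<lambda>s. fst (g s)) has_real_derivative fst D) F"
  unfolding has_vector_derivative_def has_field_derivative_def
  apply (drule has_derivative_fst)
  apply (erule has_derivative_eq_rhs)
  by (auto simp: fun_eq_iff mult.commute)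

lemma vd_snd: "(g has_vector_derivative D) F \<Longrightarrow> ((\<lambda>s. snd (g s)) has_real_derivative snd D) F"
  unfolding has_vector_derivative_def has_field_derivative_def
  apply (drule has_derivative_snd)
  apply (erule has_derivative_eq_rhs)
  by (auto simp: fun_eq_iff mult.commute)

lemma ineq1:
  fixes a b c :: real assumes "0 \<le> c" "c \<le> 1"
  shows "sqrt (c^2*a^2+b^2) \<le> (1-c)*\<bar>b\<bar> + c * sqrt (a^2+b^2)"
proof (rule real_le_lsqrt)
  show "0 \<le> (1 - c) * \<bar>b\<bar> + c * sqrt (a\<^sup>2 + b\<^sup>2)" using assms by simp
  have s: "sqrt (a\<^sup>2 + b\<^sup>2) \<ge> \<bar>b\<bar>" by (simp add: real_le_rsqrt)
  have ss: "(sqrt (a\<^sup>2 + b\<^sup>2))^2 = a^2+b^2" by simp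
  have "((1 - c) * \<bar>b\<bar> + c * sqrt (a\<^sup>2 + b\<^sup>2))\<^sup>2
     = (1-c)^2*b^2 + 2*c*(1-c)*\<bar>b\<bar>* sqrt (a\<^sup>2 + b\<^sup>2) + c^2*(a^2+b^2)"
    by (simp add: power2_eq_square algebra_simps ss[unfolded power2_eq_square])
  also have "\<dots> \<ge> (1-c)^2*b^2 + 2*c*(1-c)*b^2 + c^2*(a^2+b^2)"
  proof -
    have "\<bar>b\<bar>* sqrt (a\<^sup>2 + b\<^sup>2) \<ge> \<bar>b\<bar>*\<bar>b\<bar>" using s by (intro mult_left_mono) auto
    then have "2*c*(1-c)*(\<bar>b\<bar>* sqrt (a\<^sup>2 + b\<^sup>2)) \<ge> 2*c*(1-c)*(\<bar>b\<bar>*\<bar>b\<bar>)"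
      using assms by (intro mult_left_mono) auto
    then show ?thesis by (simp add: power2_eq_square mult.assoc)
  qed
  finally show "c\<^sup>2 * a\<^sup>2 + b\<^sup>2 \<le> ((1 - c) * \<bar>b\<bar> + c * sqrt (a\<^sup>2 + b\<^sup>2))\<^sup>2"
    by (simp add: power2_eq_square algebra_simps)
qed

lemma ineq2:
  fixes a b l :: real assumes "0 < l"
  shows "l*\<bar>a\<bar> \<le> sqrt (a^2+b^2) - \<bar>b\<bar> + l^2 * sqrt (a^2+b^2) / 2"
proof (cases "a^2+b^2 = 0")
  case True then show ?thesis by simp
next
  case False
  define s where "s = sqrt (a^2+b^2)"
  have "a^2+b^2 \<ge> 0" by simp
  with False have "a^2+b^2 > 0" by linarith
  then have sp: "s > 0" by (simp add: s_def)
  have ss: "s^2 = a^2+b^2" by (simp add: s_def)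
  have "(s - \<bar>b\<bar>)^2 \<ge> 0" by simp
  then have h1: "2* s*(s - \<bar>b\<bar>) \<ge> a^2"
    using ss by (simp add: power2_eq_square algebra_simps)
  have "(l* s - \<bar>a\<bar>)^2 \<ge> 0" by simp
  then have h2: "l^2* s^2 + a^2 \<ge> 2*l*\<bar>a\<bar>* s"
    by (simp add: power2_eq_square algebra_simps)
  have "2* s*(l*\<bar>a\<bar>) \<le> 2* s*(s - \<bar>b\<bar> + l^2* s/2)"
    using h1 h2 by (simp add: power2_eq_square algebra_simps)
  then have "l * \<bar>a\<bar> \<le> s - \<bar>b\<bar> + l^2 * s / 2" using sp by simp
  then show ?thesis by (simp add: s_def)
qed

lemma key_ineq:
  fixes a b V c l K :: real
  assumes V: "0 < V" and VK: "sqrt V \<le> K" and c: "0 \<le> c" "c < 1" and l: "0 < l"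
  shows "sqrt ((c^2*a^2+b^2)/V) + (1-c)*l/K*\<bar>a\<bar> \<le> (1 + (1-c)*l^2/2) * sqrt ((a^2+b^2)/V)"
proof -
  define r where "r = sqrt V"
  define s where "s = sqrt (a^2+b^2)"
  have r: "r > 0" using V by (simp add: r_def)
  have K: "K > 0" using r VK r_def by linarith
  have e1: "sqrt ((c^2*a^2+b^2)/V) = sqrt (c^2*a^2+b^2) / r" by (simp add: r_def real_sqrt_divide)
  have e2: "sqrt ((a^2+b^2)/V) = s / r" by (simp add: r_def s_def real_sqrt_divide)
  have i1: "sqrt (c^2*a^2+b^2) \<le> (1-c) * \<bar>b\<bar> + c * s" unfolding s_def using ineq1 c by simp
  have i2: "l * \<bar>a\<bar> \<le> s - \<bar>b\<bar> + l^2 * s / 2" unfolding s_def using ineq2 l by simp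
  have i3: "(1-c)*l/K*\<bar>a\<bar> \<le> (1-c)*l*\<bar>a\<bar>/r"
  proof -
    have "1/K \<le> 1/r" using r VK r_def by (simp add: frac_le)
    then have "((1-c)*l*\<bar>a\<bar>) * (1/K) \<le> ((1-c)*l*\<bar>a\<bar>) * (1/r)"
      using c l by (intro mult_left_mono) auto
    then show ?thesis by simp
  qed
  have "sqrt (c^2*a^2+b^2) + (1-c)*(l*\<bar>a\<bar>) \<le> (1-c)*\<bar>b\<bar> + c* s + (1-c)*(s - \<bar>b\<bar> + l^2* s/2)"
    using i1 i2 c by (intro add_mono mult_left_mono) auto
  also have "\<dots> = (1 + (1-c)*l^2/2) * s" by (simp add: algebra_simps)
  finally have m: "sqrt (c^2*a^2+b^2) + (1-c)*l*\<bar>a\<bar> \<le> (1 + (1-c)*l^2/2) * s" by (simp add: mult.assoc)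
  have "sqrt ((c^2*a^2+b^2)/V) + (1-c)*l/K*\<bar>a\<bar> \<le> sqrt (c^2*a^2+b^2)/r + (1-c)*l*\<bar>a\<bar>/r"
    using e1 i3 by simp
  also have "\<dots> = (sqrt (c^2*a^2+b^2) + (1-c)*l*\<bar>a\<bar>)/r" by (simp add: add_divide_distrib)
  also have "\<dots> \<le> ((1 + (1-c)*l^2/2) * s)/r" using m r by (simp add: divide_right_mono)
  also have "\<dots> = (1 + (1-c)*l^2/2) * sqrt ((a^2+b^2)/V)" using e2 by simp
  finally show ?thesis .
qed
lemma finite_path:
  fixes x v :: real assumes v: "v \<ge> 0"
  shows "\<exists>g\<in>hpaths (0,1) (x,v). hlength g < \<infinity>"
proof -
  define a where "a = sqrt v"
  have a: "a \<ge> 0" "a^2 = v" using v by (auto simp: a_def)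
  define g where "g t = (x*(1-(1-t)^2), (1 - t*(1-a))^2)" for t
  define D where "D t = (2*x*(1-t), -2*(1-a)*(1 - t*(1-a)))" for t
  have der: "(g has_vector_derivative D t) (at t)" for t
    unfolding g_def D_def
    by (rule has_vector_derivative_Pair; rule has_vector_derivative_eq_rhs;
        (rule derivative_eq_intros | simp add: has_real_derivative_iff_has_vector_derivative[symmetric])+;
        simp add: algebra_simps power2_eq_square)
  have contD: "continuous_on UNIV D" unfolding D_def by (intro continuous_intros)
  have pc: "g piecewise_C1_differentiable_on {0..1}"
    by (rule C1_differentiable_imp_piecewise) (use der contD in \<open>auto simp: C1_differentiable_on_def intro!: exI[of _ D] continuous_on_subset[OF contD]\<close>)
  have gP: "g \<in> hpaths (0,1) (x,v)"
    using pc a by (auto simp: hpaths_def HP_def g_def)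
  define C where "C = sqrt (4*x^2 + 4*(1-a)^2)"
  have bnd: "hdens (g t) (vector_derivative g (at t)) * indicator {0..1} t \<le> ennreal C * indicator {0..1} t" for t
  proof (cases "t \<in> {0..1}")
    case False then show ?thesis by simp
  next
    case True
    define s where "s = 1 - t*(1-a)"
    have s1: "1 - t \<le> s" "0 \<le> 1 - t" using True a by (auto simp: s_def right_diff_distrib)
    have vd: "vector_derivative g (at t) = D t" using der by (rule vector_derivative_at)
    have gt: "snd (g t) = s^2" by (simp add: g_def s_def)
    show ?thesis
    proof (cases "s^2 > 0")
      case True
      then have sp: "s > 0" using s1 by (cases "s = 0") auto
      have q: "(1-t)^2 / s^2 \<le> 1" using s1 sp by (simp add: power_mono)
      have "(fst (D t))^2 + (snd (D t))^2 = 4*x^2*(1-t)^2 + 4*(1-a)^2* s^2"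
        by (simp add: D_def s_def power2_eq_square algebra_simps)
      then have "((fst (D t))^2 + (snd (D t))^2) / snd (g t) = 4*x^2*((1-t)^2/s^2) + 4*(1-a)^2"
        using sp by (simp add: gt field_simps)
      also have "\<dots> \<le> 4*x^2*1 + 4*(1-a)^2"
        using q by (intro add_right_mono mult_left_mono) auto
      finally have "sqrt (((fst (D t))^2 + (snd (D t))^2) / snd (g t)) \<le> C"
        unfolding C_def by (simp add: real_sqrt_le_mono)
      then show ?thesis using True \<open>t\<in>{0..1}\<close> by (simp add: hdens_def vd gt ennreal_leI)
    next
      case False
      then have "s = 0" by simp
      then have "t = 1" using s1 by simp
      then have "D t = 0" using \<open>s = 0\<close> by (simp add: D_def s_def zero_prod_def)
      then show ?thesis using False by (simp add: hdens_def vd gt)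
    qed
  qed
  have "hlength g \<le> (\<integral>\<^sup>+(t::real). ennreal C * indicator {0..1} t \<partial>lborel)"
    unfolding hlength_def by (rule nn_integral_mono) (rule bnd)
  also have "\<dots> = ennreal C" by (simp add: nn_integral_cmult_indicator)
  finally show ?thesis using gP by (intro bexI[of _ g]) (auto simp: top.not_eq_extremum intro: le_less_trans)
qed
lemma dens_snd:
  assumes "snd p \<ge> 0"
  shows "ennreal (\<bar>snd d\<bar> / sqrt (1 + snd p)) \<le> hdens p d"
proof (cases "snd p > 0")
  case True
  have "\<bar>snd d\<bar> / sqrt (1 + snd p) \<le> \<bar>snd d\<bar> / sqrt (snd p)"
    using True by (intro divide_left_mono) auto
  also have "\<dots> = sqrt ((snd d)^2 / snd p)" by (simp add: real_sqrt_divide)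
  also have "\<dots> \<le> sqrt (((fst d)^2 + (snd d)^2) / snd p)"
    using True by (intro real_sqrt_le_mono divide_right_mono) auto
  finally show ?thesis using True by (simp add: hdens_def)
next
  case False
  then have V: "snd p = 0" using assms by simp
  show ?thesis
  proof (cases "d = 0")
    case True then show ?thesis using V by (simp add: hdens_def)
  next
    case False then show ?thesis using V by (simp add: hdens_def)
  qed
qed

lemma dens_compress:
  fixes c l K :: real
  assumes V: "snd p \<ge> 0" and VK: "sqrt (snd p) \<le> K" and c: "0 \<le> c" "c < 1" and l: "0 < l"
  shows "hdens (c * fst p, snd p) (c * fst d, snd d) + ennreal ((1-c)*l/K * \<bar>fst d\<bar>)
         \<le> ennreal (1 + (1-c)*l^2/2) * hdens p d"
proof (cases "snd p > 0")
  case True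
  have K: "K > 0" using True VK by (metis le_less_trans less_le_trans real_sqrt_gt_0_iff order.refl)
  have nn: "0 \<le> (1-c)*l/K * \<bar>fst d\<bar>" using c l K by simp
  have k: "sqrt (((c * fst d)^2 + (snd d)^2) / snd p) + (1-c)*l/K * \<bar>fst d\<bar>
        \<le> (1 + (1-c)*l^2/2) * sqrt (((fst d)^2 + (snd d)^2) / snd p)"
    using key_ineq[OF True VK c l, of "fst d" "snd d"] by (simp add: power_mult_distrib)
  have "hdens (c * fst p, snd p) (c * fst d, snd d) + ennreal ((1-c)*l/K * \<bar>fst d\<bar>)
       = ennreal (sqrt (((c * fst d)^2 + (snd d)^2) / snd p) + (1-c)*l/K * \<bar>fst d\<bar>)"
    using True nn by (simp add: hdens_def ennreal_plus)
  also have "\<dots> \<le> ennreal ((1 + (1-c)*l^2/2) * sqrt (((fst d)^2 + (snd d)^2) / snd p))"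
    using k by (rule ennreal_leI)
  also have "\<dots> = ennreal (1 + (1-c)*l^2/2) * hdens p d"
    using True c by (simp add: hdens_def ennreal_mult)
  finally show ?thesis .
next
  case False
  then have V0: "snd p = 0" using V by simp
  show ?thesis
  proof (cases "d = 0")
    case True then show ?thesis using V0 by (simp add: hdens_def zero_prod_def)
  next
    case False
    have pos: "ennreal (1 + (1-c)*l^2/2) \<noteq> 0" using c by simp
    show ?thesis using False V0 pos by (simp add: hdens_def ennreal_mult_top)
  qed
qed
lemma compress:
  fixes x x' v B :: real
  assumes x: "0 \<le> x" "x < x'" and v: "v \<ge> 0" and B: "B > 0"
  shows "\<exists>\<delta>>0. \<forall>g\<in>hpaths (0,1) (x',v). hlength g \<le> ennreal B \<longrightarrow>
           (\<exists>g2\<in>hpaths (0,1) (x,v). hlength g2 + ennreal \<delta> \<le> hlength g)"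
proof -
  have x'p: "x' > 0" using x by linarith
  define c where "c = x / x'"
  have c: "0 \<le> c" "c < 1" "c * x' = x" using x x'p by (auto simp: c_def)
  define K where "K = sqrt 2 + B/2"
  have K: "K > 0" using B by (simp add: K_def add_pos_pos)
  define l where "l = x' / (K * B)"
  have l: "l > 0" using x'p K B by (simp add: l_def)
  have lKB: "l * B = x' / K" using K B by (simp add: l_def field_simps)
  define \<beta> where "\<beta> = (1-c)*l/K"
  define \<kappa> where "\<kappa> = (1-c)*l^2/2"
  define \<delta> where "\<delta> = \<beta> * x' - \<kappa> * B"
  have \<beta>: "\<beta> > 0" using c l K by (simp add: \<beta>_def)
  have \<kappa>: "\<kappa> \<ge> 0" using c by (simp add: \<kappa>_def)
  have \<delta>eq: "\<delta> = \<beta> * x' / 2"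
  proof -
    have "\<kappa> * B = (1-c) * l * (l * B) / 2" by (simp add: \<kappa>_def power2_eq_square)
    also have "\<dots> = (1-c) * l * x' / K / 2" by (simp add: lKB)
    finally show ?thesis by (simp add: \<delta>_def \<beta>_def field_simps)
  qed
  have bx: "\<beta> * x' > 0" using \<beta> x'p by simp
  have \<delta>: "\<delta> > 0" using \<delta>eq bx by linarith
  show ?thesis
  proof (intro exI[of _ \<delta>] conjI ballI impI)
    show "\<delta> > 0" by (rule \<delta>)
    fix g assume gP: "g \<in> hpaths (0,1) (x',v)" and gB: "hlength g \<le> ennreal B"
    have pc: "g piecewise_C1_differentiable_on {0..1}" and gHP: "g ` {0..1} \<subseteq> HP"
      and g0: "g 0 = (0,1)" and g1: "g 1 = (x',v)"
      using gP by (auto simp: hpaths_def)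
    have gcont: "continuous_on {0..1} g" using pc by (simp add: piecewise_C1_differentiable_on_def)
    obtain S where S: "finite S" and C1: "g C1_differentiable_on {0..1} - S"
      using pc by (auto simp: piecewise_C1_differentiable_on_def)
    obtain D where gD: "\<And>t. t \<in> {0..1} - S \<Longrightarrow> (g has_vector_derivative D t) (at t)"
      and Dcont: "continuous_on ({0..1} - S) D"
      using C1 unfolding C1_differentiable_on_def by blast
    have vdg: "vector_derivative g (at t) = D t" if "t \<in> {0..1} - S" for t
      using gD[OF that] by (rule vector_derivative_at)
    have Vnn: "snd (g t) \<ge> 0" if "t \<in> {0..1}" for t
      using gHP that by (auto simp: HP_def image_subset_iff)
    define f where "f t = hdens (g t) (vector_derivative g (at t))" for t
    have Lf: "hlength g = (\<integral>\<^sup>+t. f t * indicator {0..1} t \<partial>lborel)"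
      by (simp add: hlength_def f_def)
    have VK: "sqrt (snd (g t)) \<le> K" if t: "t \<in> {0..1}" for t
    proof -
      define h where "h s = 2 * sqrt (1 + snd (g s))" for s
      define h' where "h' s = snd (D s) / sqrt (1 + snd (g s))" for s
      have "ennreal (h t - h 0) \<le> (\<integral>\<^sup>+s. f s * indicator {0..t} s \<partial>lborel)"
      proof (rule ftc_bound[OF S])
        show "0 \<le> t" using t by simp
        fix s assume s: "s \<in> {0<..<t} - S"
        then have s01: "s \<in> {0..1} - S" using t by auto
        have d1: "((\<lambda>s. snd (g s)) has_real_derivative snd (D s)) (at s)"
          by (rule vd_snd[OF gD[OF s01]])
        have pos: "0 < 1 + snd (g s)" using Vnn[of s] s01 by simp
        show "(h has_real_derivative h' s) (at s)"
          unfolding h_def h'_def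
          using DERIV_chain2[OF DERIV_real_sqrt[OF pos] DERIV_add[OF DERIV_const d1]]
          using pos by (auto intro!: derivative_eq_intros d1 simp: field_simps)
        show "ennreal \<bar>h' s\<bar> \<le> f s"
          using dens_snd[of "g s" "D s", OF Vnn] s01 pos
          by (simp add: f_def h'_def vdg abs_div)
      next
        have "continuous_on {0..t} g" by (rule continuous_on_subset[OF gcont]) (use t in auto)
        then show "continuous_on {0..t} h" unfolding h_def
          by (intro continuous_intros) auto
      qed
      also have "\<dots> \<le> hlength g"
        unfolding Lf using t by (intro nn_integral_mono) (auto simp: indicator_def)
      also have "\<dots> \<le> ennreal B" by (rule gB)
      finally have e: "ennreal (h t - h 0) \<le> ennreal B" .
      have "h t - h 0 \<le> B" using e B by (simp add: ennreal_le_iff2)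
      then have "2 * sqrt (1 + snd (g t)) \<le> 2 * sqrt 2 + B" by (simp add: h_def g0)
      then have "sqrt (1 + snd (g t)) \<le> K" by (simp add: K_def)
      moreover have "sqrt (snd (g t)) \<le> sqrt (1 + snd (g t))" by simp
      ultimately show ?thesis by linarith
    qed
    define f2 where "f2 t = ennreal (\<beta> * \<bar>fst (vector_derivative g (at t))\<bar>)" for t
    have X: "ennreal (\<beta> * x') \<le> (\<integral>\<^sup>+t. f2 t * indicator {0..1} t \<partial>lborel)"
    proof -
      have "ennreal ((\<lambda>s. \<beta> * fst (g s)) 1 - (\<lambda>s. \<beta> * fst (g s)) 0) \<le> (\<integral>\<^sup>+t. f2 t * indicator {0..1} t \<partial>lborel)"
      proof (rule ftc_bound[OF S])
        fix s assume s: "s \<in> {0<..<1} - S"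
        then have s01: "s \<in> {0..1} - S" by auto
        show "((\<lambda>s. \<beta> * fst (g s)) has_real_derivative \<beta> * fst (D s)) (at s)"
          by (intro DERIV_cmult vd_fst[OF gD[OF s01]])
        show "ennreal \<bar>\<beta> * fst (D s)\<bar> \<le> f2 s"
          using s01 \<beta> by (simp add: f2_def vdg abs_mult)
      next
        show "continuous_on {0..1} (\<lambda>s. \<beta> * fst (g s))"
          using gcont by (intro continuous_intros)
      qed simp
      then show ?thesis by (simp add: g0 g1)
    qed
    define g2 where "g2 t = (c * fst (g t), snd (g t))" for t
    define D2 where "D2 t = (c * fst (D t), snd (D t))" for t
    have g2D: "(g2 has_vector_derivative D2 t) (at t)" if "t \<in> {0..1} - S" for t
      unfolding g2_def D2_def
      using vd_fst[OF gD[OF that]] vd_snd[OF gD[OF that]]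
      by (intro has_vector_derivative_Pair)
         (auto simp: has_real_derivative_iff_has_vector_derivative[symmetric] intro: DERIV_cmult)
    have vdg2: "vector_derivative g2 (at t) = D2 t" if "t \<in> {0..1} - S" for t
      using g2D[OF that] by (rule vector_derivative_at)
    have g2P: "g2 \<in> hpaths (0,1) (x,v)"
    proof -
      have "continuous_on {0..1} g2" unfolding g2_def using gcont by (intro continuous_intros)
      moreover have "g2 C1_differentiable_on {0..1} - S"
        unfolding C1_differentiable_on_def
      proof (intro exI[of _ D2] conjI ballI)
        show "continuous_on ({0..1} - S) D2" unfolding D2_def using Dcont by (intro continuous_intros)
      qed (use g2D in auto)
      ultimately have "g2 piecewise_C1_differentiable_on {0..1}"
        using S by (auto simp: piecewise_C1_differentiable_on_def)
      moreover have "g2 ` {0..1} \<subseteq> HP" using Vnn by (auto simp: g2_def HP_def)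
      ultimately show ?thesis using g0 g1 c by (simp add: hpaths_def g2_def)
    qed
    have pw: "AE t in lborel. hdens (g2 t) (vector_derivative g2 (at t)) * indicator {0..1} t + f2 t * indicator {0..1} t
               \<le> ennreal (1 + \<kappa>) * (f t * indicator {0..1} t)"
      using AE_not_in[OF finite_imp_null_set_lborel[OF S]]
    proof eventually_elim
      case (elim t)
      show ?case
      proof (cases "t \<in> {0..1}")
        case False then show ?thesis by simp
      next
        case True
        then have t: "t \<in> {0..1} - S" using elim by simp
        have "hdens (g2 t) (D2 t) + ennreal (\<beta> * \<bar>fst (D t)\<bar>) \<le> ennreal (1 + \<kappa>) * hdens (g t) (D t)"
          using dens_compress[OF Vnn[OF True] VK[OF True] c(1,2) l, of "D t"]
          by (simp add: g2_def D2_def \<beta>_def \<kappa>_def)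
        then show ?thesis using True t by (simp add: vdg vdg2 f_def f2_def)
      qed
    qed
    define L2 where "L2 = hlength g2"
    have "L2 + ennreal (\<beta> * x') \<le> L2 + (\<integral>\<^sup>+t. f2 t * indicator {0..1} t \<partial>lborel)"
      using X by (rule add_left_mono)
    also have "\<dots> \<le> (\<integral>\<^sup>+t. hdens (g2 t) (vector_derivative g2 (at t)) * indicator {0..1} t + f2 t * indicator {0..1} t \<partial>lborel)"
      unfolding L2_def hlength_def by (rule nn_integral_superadd)
    also have "\<dots> \<le> (\<integral>\<^sup>+t. ennreal (1 + \<kappa>) * (f t * indicator {0..1} t) \<partial>lborel)"
      using pw by (rule nn_integral_mono_AE)
    also have "\<dots> \<le> ennreal (1 + \<kappa>) * hlength g"
      unfolding Lf using \<kappa> by (intro nn_integral_subcmult) auto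
    finally have main: "L2 + ennreal (\<beta> * x') \<le> ennreal (1 + \<kappa>) * hlength g" .
    obtain L where L: "hlength g = ennreal L" "0 \<le> L" "L \<le> B"
      using gB B by (cases "hlength g" rule: ennreal_cases) (auto simp: top_unique)
    have m2: "ennreal (1 + \<kappa>) * hlength g = ennreal ((1 + \<kappa>) * L)"
      using L \<kappa> by (simp add: ennreal_mult)
    have pos1: "0 \<le> (1 + \<kappa>) * L" using L \<kappa> by simp
    have "L2 \<le> L2 + ennreal (\<beta> * x')" by simp
    also have "\<dots> \<le> ennreal ((1 + \<kappa>) * L)" using main m2 by simp
    finally have "L2 \<le> ennreal ((1 + \<kappa>) * L)" .
    then obtain L2r where L2r: "L2 = ennreal L2r" "0 \<le> L2r"
      by (cases L2 rule: ennreal_cases) (auto simp: top_unique)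
    have bx0: "0 \<le> \<beta> * x'" using bx by simp
    have "ennreal (L2r + \<beta> * x') = L2 + ennreal (\<beta> * x')"
      using L2r bx0 by (simp add: ennreal_plus)
    also have "\<dots> \<le> ennreal ((1 + \<kappa>) * L)" using main m2 by simp
    finally have "ennreal (L2r + \<beta> * x') \<le> ennreal ((1 + \<kappa>) * L)" .
    then have r: "L2r + \<beta> * x' \<le> (1 + \<kappa>) * L"
      using pos1 by (simp only: ennreal_le_iff)
    have "\<kappa> * L \<le> \<kappa> * B" using L \<kappa> by (intro mult_left_mono) auto
    then have "L2r + \<delta> \<le> L" using r by (simp add: \<delta>_def algebra_simps)
    then have "ennreal (L2r + \<delta>) \<le> ennreal L" by (rule ennreal_leI)
    moreover have "ennreal (L2r + \<delta>) = hlength g2 + ennreal \<delta>"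
      using L2r \<delta> by (simp add: L2_def[symmetric] ennreal_plus)
    ultimately have "hlength g2 + ennreal \<delta> \<le> hlength g"
      using L by simp
    then show "\<exists>g2\<in>hpaths (0, 1) (x, v). hlength g2 + ennreal \<delta> \<le> hlength g"
      using g2P by blast
  qed
qed
theorem lemma2p12:
  fixes v :: real
  assumes "v \<ge> 0"
  shows "strict_mono_on {0..} (\<lambda>x. dH (0, 1) (x, v))"
proof (rule strict_mono_onI)
  fix x x' :: real assume x0: "x \<in> {0..}" and x': "x' \<in> {0..}" and xx: "x < x'"
  define I' where "I' = (INF g\<in>hpaths (0,1) (x',v). hlength g)"
  define I where "I = (INF g\<in>hpaths (0,1) (x,v). hlength g)"
  obtain g0 where g0: "g0 \<in> hpaths (0,1) (x',v)" "hlength g0 < \<infinity>"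
    using finite_path[OF assms] by blast
  have "I' \<le> hlength g0" unfolding I'_def using g0(1) by (rule INF_lower)
  then have "I' \<noteq> top" using g0(2) by (auto simp: top_unique)
  then obtain d' where d': "I' = ennreal d'" "0 \<le> d'" by (cases I' rule: ennreal_cases) auto
  obtain \<delta> where \<delta>: "\<delta> > 0" and cmp: "\<forall>g\<in>hpaths (0,1) (x',v). hlength g \<le> ennreal (d' + 1) \<longrightarrow>
           (\<exists>g2\<in>hpaths (0,1) (x,v). hlength g2 + ennreal \<delta> \<le> hlength g)"
    using compress[of x x' v "d' + 1"] x0 xx assms d'(2) by auto
  define \<epsilon> where "\<epsilon> = min 1 \<delta> / 2"
  have \<epsilon>: "0 < \<epsilon>" "\<epsilon> \<le> 1" "\<epsilon> \<le> \<delta> / 2" using \<delta> by (auto simp: \<epsilon>_def)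
  have "I' < ennreal (d' + \<epsilon>)" using d' \<epsilon> by (simp add: ennreal_lessI)
  then obtain g where g: "g \<in> hpaths (0,1) (x',v)" "hlength g < ennreal (d' + \<epsilon>)"
    unfolding I'_def by (auto simp: INF_less_iff)
  have "ennreal (d' + \<epsilon>) \<le> ennreal (d' + 1)" using \<epsilon> by (intro ennreal_leI) simp
  then have "hlength g \<le> ennreal (d' + 1)" using g(2) by simp
  then obtain g2 where g2: "g2 \<in> hpaths (0,1) (x,v)" "hlength g2 + ennreal \<delta> \<le> hlength g"
    using cmp g(1) by blast
  have "I \<le> hlength g2" unfolding I_def using g2(1) by (rule INF_lower)
  then have lt: "I + ennreal \<delta> < ennreal (d' + \<epsilon>)"
    using g2(2) g(2) by (meson add_right_mono order.trans order.strict_trans1)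
  then have "I \<noteq> top" by (auto simp: top_unique)
  then obtain i where i: "I = ennreal i" "0 \<le> i" by (cases I rule: ennreal_cases) auto
  have "ennreal (i + \<delta>) < ennreal (d' + \<epsilon>)" using lt i \<delta> by (simp add: ennreal_plus)
  moreover have "0 \<le> i + \<delta>" using i \<delta> by simp
  ultimately have "i + \<delta> < d' + \<epsilon>" by (simp add: ennreal_less_iff)
  then have "i < d'" using \<epsilon> by linarith
  moreover have "dH (0,1) (x,v) = i" using i by (simp add: dH_def I_def[symmetric])
  moreover have "dH (0,1) (x',v) = d'" using d' by (simp add: dH_def I'_def[symmetric])
  ultimately show "dH (0, 1) (x, v) < dH (0, 1) (x', v)" by simp
qed

end
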